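(* Let $g\in L^1(\Omega)$ and $k,l\in\mathbb Z$. Then $$\alpha(M_g)(k/a,l)=\begin{cases}e^{\pi ilk/a}\displaystyle\int_\Omega g(\theta,\sigma)e^{-2\pi i(l\sigma+k\theta/a)}\,d\theta\,d\sigma,& k\in a\mathbb Z,\\ 0,&\text{otherwise.}\end{cases}$$
   Context: $\mathcal H=L^2(\mathbb R)$, $\Omega=[0,1)\times[0,1)$, $(\rho(x,y,z)\varphi)(t)=z\,e^{\pi i(xy+2yt)}\varphi(t+x)$, $\rho(w,1)=\rho(x,y,1)$ for $w=(x,y)$. Fix a positive integer $a$, $N=\mathbb Z\times a\mathbb Z$, $N^\perp=\frac1a\mathbb Z\times\mathbb Z$. $\mathcal A_N$ is the von Neumann algebra of bounded $T$ on $\mathcal H$ with $\rho(n,1)T\rho(n,1)^{-1}=T$ for all $n\in N$, with faithful normal finite trace $\tau(T)=\sum_{h=0}^{a-1}\langle T\chi_h,\chi_h\rangle$, $\chi_h=\mathbf 1_{[h/a,(h+1)/a)}$, extended to the noncommutative space $L^1(\mathcal A_N,\tau)$. For $T\in L^1(\mathcal A_N,\tau)$ and $n'\in N^\perp$, $\alpha(T)(n')=\tau(T\rho(n',1)^* )$. Zak transform: $(Z\varphi)(\theta,\sigma)=\sum_{l\in\mathbb Z}\varphi(\sigma-l)e^{2\pi il\theta}$, extended to a unitary $\mathcal H\to L^2(\Omega)$. $M_g\varphi=Z^{-1}(g\cdot Z\varphi)$ on $\{\varphi:g\cdot Z\varphi\in L^2(\Omega)\}$; $M_g\in L^1(\mathcal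 A_N,\tau)$. *)

theory Defs
  imports "HOL-Analysis.Analysis"
begin

text \<open>Elements of H = L^2(R) are represented by functions real => complex.\<close>

definition Omega :: "(real \<times> real) set" where
  "Omega = {0..<1} \<times> {0..<1}"

definition rho :: "real \<Rightarrow> real \<Rightarrow> complex \<Rightarrow> (real \<Rightarrow> complex) \<Rightarrow> real \<Rightarrow> complex" where
  "rho x y z \<phi> t = z * exp (pi * \<i> * complex_of_real (x * y + 2 * y * t)) * \<phi> (t + x)"

text \<open>Adjoint (= inverse, rho(w,1) is unitary) of rho(x,y,1): it is rho(-x,-y,1).\<close>
definition rho_adj :: "real \<Rightarrow> real \<Rightarrow> (real \<Rightarrow> complex) \<Rightarrow> real \<Rightarrow> complex" where
  "rho_adj x y \<phi> = rho (- x) (- y) 1 \<phi>"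

definition chi :: "nat \<Rightarrow> nat \<Rightarrow> real \<Rightarrow> complex" where
  "chi a h t = indicator {real h / real a ..< (real h + 1) / real a} t"

definition zak :: "(real \<Rightarrow> complex) \<Rightarrow> real \<times> real \<Rightarrow> complex" where
  "zak \<phi> p = (case p of (\<theta>, \<sigma>) \<Rightarrow>
     (\<Sum>\<^sub>\<infinity> l::int. \<phi> (\<sigma> - of_int l) * exp (2 * pi * \<i> * of_int l * complex_of_real \<theta>)))"

text \<open>Inverse Zak transform (recovering phi(t) from the Fourier coefficients in theta
  at sigma = frac t).\<close>
definition zak_inv :: "(real \<times> real \<Rightarrow> complex) \<Rightarrow> real \<Rightarrow> complex" where
  "zak_inv F t = set_lebesgue_integral lborel {0..<1}
     (\<lambda>\<theta>. F (\<theta>, frac t) * exp (2 * pi * \<i> * of_int \<lfloor>t\<rfloor> * complex_of_real \<theta>))"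

definition M_op :: "(real \<times> real \<Rightarrow> complex) \<Rightarrow> (real \<Rightarrow> complex) \<Rightarrow> real \<Rightarrow> complex" where
  "M_op g \<phi> = zak_inv (\<lambda>p. g p * zak \<phi> p)"

definition inner_H :: "(real \<Rightarrow> complex) \<Rightarrow> (real \<Rightarrow> complex) \<Rightarrow> complex" where
  "inner_H f h = integral\<^sup>L lborel (\<lambda>t. f t * cnj (h t))"

text \<open>tau(M_G rho(k/a,l,1)^*) = sum_h < M_G rho(k/a,l,1)^* chi_h, chi_h >
  (the trace formula, meaningful for bounded G, where M_G is bounded).\<close>
definition tau_bdd :: "nat \<Rightarrow> (real \<times> real \<Rightarrow> complex) \<Rightarrow> int \<Rightarrow> int \<Rightarrow> complex" where
  "tau_bdd a G k l = (\<Sum>h<a. inner_H (M_op G (rho_adj (of_int k / real a) (of_int l) (chi a h))) (chi a h))"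

text \<open>alpha(M_g)(k/a,l) = tau(M_g rho(k/a,l,1)^*) for g in L^1(Omega), where tau is
  extended to L^1(A_N,tau) by continuity: value obtained as the limit along any
  sequence of bounded G_n converging to g in L^1(Omega).\<close>
definition alpha_M :: "nat \<Rightarrow> (real \<times> real \<Rightarrow> complex) \<Rightarrow> int \<Rightarrow> int \<Rightarrow> complex" where
  "alpha_M a g k l = (THE c. \<forall>G :: nat \<Rightarrow> real \<times> real \<Rightarrow> complex.
      ((\<forall>n. set_integrable lborel Omega (G n) \<and> (\<exists>B. \<forall>p\<in>Omega. norm (G n p) \<le> B)) \<and>
       (\<lambda>n. set_lebesgue_integral lborel Omega (\<lambda>p. norm (G n p - g p))) \<longlonglongrightarrow> 0)
      \<longrightarrow> (\<lambda>n. tau_bdd a (G n) k l) \<longlonglongrightarrow> c)"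

end

theory Submission imports Defs begin

lemma chi_shift_iff:
  fixes a h :: nat and k l' :: int and t :: real
  assumes a: "a > 0" and t: "t \<in> {real h / real a ..< (real h + 1) / real a}"
  shows "t - of_int l' + - (of_int k / real a) \<in> {real h / real a ..< (real h + 1) / real a}
     \<longleftrightarrow> int a * l' + k = 0"
proof -
  have ar: "real a > 0" using a by simp
  from t have t1: "real h \<le> real a * t" and t2: "real a * t < real h + 1"
    using ar by (auto simp: field_simps)
  have gen: "s \<in> {real h / real a ..< (real h + 1) / real a} \<longleftrightarrow> real h \<le> real a * s \<and> real a * s < real h + 1" for s
    using ar by (auto simp: field_simps)
  have ee: "real a * (t - of_int l' + - (of_int k / real a)) = real a * t - of_int (int a * l' + k)"
    using ar by (simp add: field_simps)
  have "t - of_int l' + - (of_int k / real a) \<in> {real h / real a ..< (real h + 1) / real a}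
     \<longleftrightarrow> real h \<le> real a * t - of_int (int a * l' + k) \<and> real a * t - of_int (int a * l' + k) < real h + 1"
    unfolding gen ee ..
  also have "\<dots> \<longleftrightarrow> int a * l' + k = 0"
  proof
    assume H: "real h \<le> real a * t - of_int (int a * l' + k) \<and> real a * t - of_int (int a * l' + k) < real h + 1"
    then have "of_int (int a * l' + k) < (1::real)" "of_int (int a * l' + k) > (-1::real)"
      using t1 t2 by linarith+
    then show "int a * l' + k = 0" by linarith
  qed (use t1 t2 in simp)
  finally show ?thesis .
qed

lemma zak_psi:
  fixes a h :: nat and k l :: int and t \<theta> :: real
  assumes a: "a > 0" and t: "t \<in> {real h / real a ..< (real h + 1) / real a}"
  shows "zak (rho_adj (of_int k / real a) (of_int l) (chi a h)) (\<theta>, t) =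
    (if int a dvd k then exp (pi * \<i> * of_int l * of_int k / of_nat a) *
       exp (- 2 * pi * \<i> * complex_of_real (of_int l * t + of_int k * \<theta> / real a)) else 0)"
proof -
  define f where "f = (\<lambda>l'::int. rho_adj (of_int k / real a) (of_int l) (chi a h) (t - of_int l') *
      exp (2 * pi * \<i> * of_int l' * complex_of_real \<theta>))"
  have zf: "zak (rho_adj (of_int k / real a) (of_int l) (chi a h)) (\<theta>, t) = infsum f UNIV"
    unfolding zak_def f_def by simp
  have f0: "f l' = 0" if "int a * l' + k \<noteq> 0" for l'
    using chi_shift_iff[OF a t, of l' k] that
    unfolding f_def rho_adj_def rho_def chi_def by (simp add: indicator_def)
  show ?thesis
  proof (cases "int a dvd k")
    case False
    have "infsum f UNIV = 0"
      by (rule infsum_0) (metis f0 False dvd_def add.commute add_eq_0_iff minus_mult_right mult_minus_right)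
    then show ?thesis using False zf by simp
  next
    case True
    then obtain j where kj: "k = int a * j" by (auto simp: dvd_def)
    have "infsum f UNIV = infsum f {-j}"
    proof (rule infsum_cong_neutral)
      fix x assume "x \<in> UNIV - {-j}"
      then have "x + j \<noteq> 0" by auto
      then have "int a * (x + j) \<noteq> 0" using a by simp
      then show "f x = 0" by (intro f0) (simp add: kj algebra_simps)
    qed auto
    also have "\<dots> = f (-j)" by simp
    also have "\<dots> = exp (pi * \<i> * of_int l * of_int k / of_nat a) *
       exp (- 2 * pi * \<i> * complex_of_real (of_int l * t + of_int k * \<theta> / real a))"
    proof -
      have kaj: "of_int k / real a = of_int j" using a by (simp add: kj)
      have ci: "chi a h (t - of_int (- j) + - (of_int k / real a)) = 1"
        using chi_shift_iff[OF a t, of "-j" k] by (simp add: chi_def kj)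
      have kac: "(of_int k :: complex) / of_nat a = of_int j"
        using a by (simp add: kj)
      have "f (-j) = exp (pi * \<i> * complex_of_real ((- (of_int k / real a)) * (- of_int l) + 2 * (- of_int l) * (t - of_int (-j)))) *
           exp (2 * pi * \<i> * of_int (-j) * complex_of_real \<theta>)"
        unfolding f_def rho_adj_def rho_def using ci by simp
      also have "\<dots> = exp ((pi * \<i> * of_int l * of_int j - 2 * pi * \<i> * complex_of_real (of_int l * t + of_int j * \<theta>))
            + (2 * of_int (- l * j) * pi) * \<i>)"
        unfolding kaj by (simp add: mult_exp_exp algebra_simps)
      also have "\<dots> = exp (pi * \<i> * of_int l * of_int j - 2 * pi * \<i> * complex_of_real (of_int l * t + of_int j * \<theta>))"
      proof -
        have "exp (2 * complex_of_int (- (l * j)) * complex_of_real pi * \<i>) = 1"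
          using exp_integer_2pi[of "of_int (- (l * j))"] by simp
        then show ?thesis by (subst exp_add) simp
      qed
      also have "\<dots> = exp (pi * \<i> * of_int l * of_int k / of_nat a) *
       exp (- 2 * pi * \<i> * complex_of_real (of_int l * t + of_int k * \<theta> / real a))"
      proof -
        have e1: "pi * \<i> * of_int l * of_int k / of_nat a = pi * \<i> * of_int l * (of_int j :: complex)"
          using kac by (metis times_divide_eq_right)
        have e2: "of_int l * t + of_int k * \<theta> / real a = of_int l * t + of_int j * \<theta>"
          using kaj by (metis times_divide_eq_left)
        show ?thesis unfolding e1 e2 by (simp add: mult_exp_exp algebra_simps)
      qed
      finally show ?thesis .
    qed
    finally show ?thesis using True zf by simp
  qed
qed

lemma sum_ind:
  fixes a :: nat and t :: real
  assumes a: "a > 0"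
  shows "(\<Sum>h<a. indicator {real h / real a ..< (real h + 1) / real a} t :: real) = indicator {0..<1} t"
proof -
  have ar: "real a > 0" using a by simp
  have mem: "t \<in> {real h / real a ..< (real h + 1) / real a} \<longleftrightarrow> \<lfloor>real a * t\<rfloor> = int h" for h :: nat
    using ar by (simp add: floor_eq_iff field_simps)
  show ?thesis
  proof (cases "t \<in> {0..<1}")
    case True
    define h0 where "h0 = nat \<lfloor>real a * t\<rfloor>"
    have f0: "\<lfloor>real a * t\<rfloor> \<ge> 0" using True ar by simp
    have "real a * t < real a" using True ar by simp
    then have "\<lfloor>real a * t\<rfloor> < int a" by (simp add: floor_less_iff)
    then have h0a: "h0 < a" using f0 unfolding h0_def by linarith
    have "(\<Sum>h<a. indicator {real h / real a ..< (real h + 1) / real a} t :: real) = (\<Sum>h<a. if h = h0 then 1 else 0)"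
    proof (rule sum.cong)
      fix h assume "h \<in> {..<a}"
      have "(h = h0) = (\<lfloor>real a * t\<rfloor> = int h)" using f0 unfolding h0_def by linarith
      then have "t \<in> {real h / real a ..< (real h + 1) / real a} \<longleftrightarrow> h = h0" using mem[of h] by blast
      then show "indicator {real h / real a ..< (real h + 1) / real a} t = (if h = h0 then 1 else (0::real))"
        by (simp only: indicator_def if_bool_eq_conj) simp
    qed simp
    also have "\<dots> = 1" using h0a by simp
    finally show ?thesis using True by simp
  next
    case False
    have "t \<notin> {real h / real a ..< (real h + 1) / real a}" if "h < a" for h
    proof
      assume "t \<in> {real h / real a ..< (real h + 1) / real a}"
      then have "real h \<le> real a * t" "real a * t < real h + 1" using ar by (auto simp: field_simps)
      moreover have "real h + 1 \<le> real a" using that by simp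
      ultimately have "0 \<le> real a * t" "real a * t < real a * 1" by linarith+
      then have "0 \<le> t" "t < 1" using ar
        by (simp_all add: zero_le_mult_iff)
      then show False using False by simp
    qed
    then have "(\<Sum>h<a. indicator {real h / real a ..< (real h + 1) / real a} t :: real) = 0"
      by (intro sum.neutral ballI) (metis lessThan_iff indicator_simps(2))
    then show ?thesis using False by simp
  qed
qed

lemma sum_set_int:
  fixes a :: nat and P :: "real \<Rightarrow> complex"
  assumes a: "a > 0" and P: "set_integrable lborel {0..<1} P"
  shows "(\<Sum>h<a. set_lebesgue_integral lborel {real h / real a ..< (real h + 1) / real a} P) =
    set_lebesgue_integral lborel {0..<1} P"
proof -
  have sub: "{real h / real a ..< (real h + 1) / real a} \<subseteq> {0..<1}" if "h < a" for h
  proof -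
    have "real h + 1 \<le> real a" using that by simp
    then show ?thesis using a by (auto simp: field_simps)
  qed
  have int: "set_integrable lborel {real h / real a ..< (real h + 1) / real a} P" if "h < a" for h
    by (rule set_integrable_subset[OF P _ sub[OF that]]) simp
  have "(\<Sum>h<a. set_lebesgue_integral lborel {real h / real a ..< (real h + 1) / real a} P) =
     integral\<^sup>L lborel (\<lambda>t. \<Sum>h<a. indicator {real h / real a ..< (real h + 1) / real a} t *\<^sub>R P t)"
    unfolding set_lebesgue_integral_def
    by (rule Bochner_Integration.integral_sum[symmetric]) (use int in \<open>auto simp: set_integrable_def\<close>)
  also have "\<dots> = integral\<^sup>L lborel (\<lambda>t. indicator {0..<1} t *\<^sub>R P t)"
    by (simp add: scaleR_sum_left[symmetric] sum_ind[OF a])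
  finally show ?thesis unfolding set_lebesgue_integral_def .
qed

lemma fubini_psi:
  fixes G :: "real \<times> real \<Rightarrow> complex" and k l :: int and a :: nat
  assumes G: "set_integrable lborel Omega G"
  defines "H \<equiv> (\<lambda>(\<theta>, \<sigma>). G (\<theta>, \<sigma>) *
               exp (- 2 * pi * \<i> * complex_of_real (of_int l * \<sigma> + of_int k * \<theta> / real a)))"
  shows "set_integrable lborel Omega H"
    and "set_integrable lborel {0..<1} (\<lambda>\<sigma>. set_lebesgue_integral lborel {0..<1} (\<lambda>\<theta>. H (\<theta>, \<sigma>)))"
    and "set_lebesgue_integral lborel {0..<1} (\<lambda>\<sigma>. set_lebesgue_integral lborel {0..<1} (\<lambda>\<theta>. H (\<theta>, \<sigma>)))
         = set_lebesgue_integral lborel Omega H"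
proof -
  define E where "E = (\<lambda>(\<theta>::real, \<sigma>::real). exp (- 2 * pi * \<i> * complex_of_real (of_int l * \<sigma> + of_int k * \<theta> / real a)))"
  have HE: "H x = G x * E x" for x unfolding H_def E_def by (simp add: case_prod_unfold)
  have mG: "(\<lambda>x. indicator Omega x *\<^sub>R G x) \<in> borel_measurable lborel"
    using G unfolding set_integrable_def by (rule borel_measurable_integrable)
  have mE: "E \<in> borel_measurable lborel"
  proof -
    have "continuous_on UNIV E"
      unfolding E_def case_prod_unfold times_divide_eq_left[symmetric] by (intro continuous_intros)
    then have "E \<in> borel_measurable borel" by (rule borel_measurable_continuous_onI)
    then show ?thesis by simp
  qed
  have nE: "norm (E x) = 1" for x
    unfolding E_def case_prod_unfold by (simp add: norm_exp_eq_Re)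
  show HI: "set_integrable lborel Omega H"
  proof (rule set_integrable_bound[OF G])
    have "(\<lambda>x. indicator Omega x *\<^sub>R H x) = (\<lambda>x. (indicator Omega x *\<^sub>R G x) * E x)"
      by (auto simp: HE)
    then show "set_borel_measurable lborel Omega H"
      unfolding set_borel_measurable_def using borel_measurable_times[OF mG mE] by (simp only:)
    show "AE x in lborel. x \<in> Omega \<longrightarrow> norm (H x) \<le> norm (G x)"
      by (simp add: HE norm_mult nE)
  qed
  define F where "F = (\<lambda>\<theta> \<sigma>. indicator Omega (\<theta>, \<sigma>) *\<^sub>R H (\<theta>, \<sigma>))"
  have FI: "integrable (lborel \<Otimes>\<^sub>M lborel) (case_prod F)"
  proof -
    have "case_prod F = (\<lambda>x. indicator Omega x *\<^sub>R H x)" by (auto simp: F_def)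
    then show ?thesis using HI unfolding set_integrable_def lborel_prod by simp
  qed
  have inner: "(\<integral>\<theta>. F \<theta> \<sigma> \<partial>lborel) = indicator {0..<1} \<sigma> *\<^sub>R set_lebesgue_integral lborel {0..<1} (\<lambda>\<theta>. H (\<theta>, \<sigma>))" for \<sigma>
  proof -
    have "F \<theta> \<sigma> = indicator {0..<1} \<sigma> *\<^sub>R (indicator {0..<1} \<theta> *\<^sub>R H (\<theta>, \<sigma>))" for \<theta>
      unfolding F_def Omega_def by (simp add: indicator_times)
    then have "(\<integral>\<theta>. F \<theta> \<sigma> \<partial>lborel) = (\<integral>\<theta>. indicator {0..<1} \<sigma> *\<^sub>R (indicator {0..<1} \<theta> *\<^sub>R H (\<theta>, \<sigma>)) \<partial>lborel)"
      by presburger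
    also have "\<dots> = indicator {0..<1} \<sigma> *\<^sub>R set_lebesgue_integral lborel {0..<1} (\<lambda>\<theta>. H (\<theta>, \<sigma>))"
      unfolding set_lebesgue_integral_def by (rule integral_scaleR_right)
    finally show ?thesis .
  qed
  show "set_integrable lborel {0..<1} (\<lambda>\<sigma>. set_lebesgue_integral lborel {0..<1} (\<lambda>\<theta>. H (\<theta>, \<sigma>)))"
    using lborel_pair.integrable_snd[OF FI] unfolding set_integrable_def inner .
  have "set_lebesgue_integral lborel {0..<1} (\<lambda>\<sigma>. set_lebesgue_integral lborel {0..<1} (\<lambda>\<theta>. H (\<theta>, \<sigma>)))
     = (\<integral>\<sigma>. (\<integral>\<theta>. F \<theta> \<sigma> \<partial>lborel) \<partial>lborel)"
    unfolding inner set_lebesgue_integral_def ..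
  also have "\<dots> = integral\<^sup>L (lborel \<Otimes>\<^sub>M lborel) (case_prod F)"
    by (rule lborel_pair.integral_snd[OF FI])
  also have "\<dots> = set_lebesgue_integral lborel Omega H"
  proof -
    have "case_prod F = (\<lambda>x. indicator Omega x *\<^sub>R H x)" by (auto simp: F_def)
    then show ?thesis unfolding set_lebesgue_integral_def lborel_prod by simp
  qed
  finally show "set_lebesgue_integral lborel {0..<1} (\<lambda>\<sigma>. set_lebesgue_integral lborel {0..<1} (\<lambda>\<theta>. H (\<theta>, \<sigma>)))
         = set_lebesgue_integral lborel Omega H" .
qed

lemma M_pt:
  fixes a h :: nat and k l :: int and t :: real and G :: "real \<times> real \<Rightarrow> complex"
  assumes a: "a > 0" and h: "h < a" and t: "t \<in> {real h / real a ..< (real h + 1) / real a}"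
  shows "M_op G (rho_adj (of_int k / real a) (of_int l) (chi a h)) t =
    (if int a dvd k then exp (pi * \<i> * of_int l * of_int k / of_nat a) *
       set_lebesgue_integral lborel {0..<1} (\<lambda>\<theta>. G (\<theta>, t) *
          exp (- 2 * pi * \<i> * complex_of_real (of_int l * t + of_int k * \<theta> / real a))) else 0)"
proof -
  have "real h + 1 \<le> real a" using h by simp
  then have "(real h + 1) / real a \<le> 1" using a by simp
  moreover have "0 \<le> real h / real a" by simp
  ultimately have t01: "0 \<le> t" "t < 1" using t by (simp_all only: atLeastLessThan_iff) linarith+
  then have ft: "frac t = t" and flt: "\<lfloor>t\<rfloor> = 0" by (simp_all add: frac_eq floor_eq_iff)
  have "M_op G (rho_adj (of_int k / real a) (of_int l) (chi a h)) t =
     set_lebesgue_integral lborel {0..<1} (\<lambda>\<theta>. G (\<theta>, t) * zak (rho_adj (of_int k / real a) (of_int l) (chi a h)) (\<theta>, t))"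
    unfolding M_op_def zak_inv_def ft flt by simp
  also have "\<dots> = (if int a dvd k then exp (pi * \<i> * of_int l * of_int k / of_nat a) *
       set_lebesgue_integral lborel {0..<1} (\<lambda>\<theta>. G (\<theta>, t) *
          exp (- 2 * pi * \<i> * complex_of_real (of_int l * t + of_int k * \<theta> / real a))) else 0)"
  proof (cases "int a dvd k")
    case True
    then show ?thesis unfolding zak_psi[OF a t]
      by (simp add: set_integral_mult_right[symmetric] algebra_simps del: set_integral_mult_right)
  next
    case False
    then show ?thesis unfolding zak_psi[OF a t] by simp
  qed
  finally show ?thesis .
qed

definition Fv :: "nat \<Rightarrow> (real \<times> real \<Rightarrow> complex) \<Rightarrow> int \<Rightarrow> int \<Rightarrow> complex" where
  "Fv a g k l = (if int a dvd k
     then exp (pi * \<i> * of_int l * of_int k / of_nat a) *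
          set_lebesgue_integral lborel Omega
            (\<lambda>(\<theta>, \<sigma>). g (\<theta>, \<sigma>) *
               exp (- 2 * pi * \<i> * complex_of_real (of_int l * \<sigma> + of_int k * \<theta> / real a)))
     else 0)"

lemma tau_formula:
  fixes a :: nat and k l :: int and G :: "real \<times> real \<Rightarrow> complex"
  assumes a: "a > 0" and G: "set_integrable lborel Omega G"
  shows "tau_bdd a G k l = Fv a G k l"
proof -
  define Psi where "Psi = (\<lambda>t. set_lebesgue_integral lborel {0..<1} (\<lambda>\<theta>. G (\<theta>, t) *
          exp (- 2 * pi * \<i> * complex_of_real (of_int l * t + of_int k * \<theta> / real a))))"
  define c where "c = exp (pi * \<i> * of_int l * of_int k / of_nat a)"
  define Phi where "Phi = (\<lambda>t. if int a dvd k then c * Psi t else 0)"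
  have inner: "inner_H (M_op G (rho_adj (of_int k / real a) (of_int l) (chi a h))) (chi a h) =
     set_lebesgue_integral lborel {real h / real a ..< (real h + 1) / real a} Phi" if h: "h < a" for h
    unfolding inner_H_def set_lebesgue_integral_def
  proof (rule Bochner_Integration.integral_cong[OF refl])
    fix t
    show "M_op G (rho_adj (of_int k / real a) (of_int l) (chi a h)) t * cnj (chi a h t) =
      indicator {real h / real a ..< (real h + 1) / real a} t *\<^sub>R Phi t"
    proof (cases "t \<in> {real h / real a ..< (real h + 1) / real a}")
      case True
      then show ?thesis unfolding M_pt[OF a h True] Phi_def Psi_def c_def chi_def by simp
    next
      case False
      then show ?thesis unfolding chi_def by simp
    qed
  qed
  have "tau_bdd a G k l = (\<Sum>h<a. set_lebesgue_integral lborel {real h / real a ..< (real h + 1) / real a} Phi)"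
    unfolding tau_bdd_def using inner by simp
  also have "\<dots> = Fv a G k l"
  proof (cases "int a dvd k")
    case True
    have PsiI: "set_integrable lborel {0..<1} Psi"
      using fubini_psi(2)[OF G, of l k a] unfolding Psi_def by simp
    have "(\<Sum>h<a. set_lebesgue_integral lborel {real h / real a ..< (real h + 1) / real a} Phi)
       = c * (\<Sum>h<a. set_lebesgue_integral lborel {real h / real a ..< (real h + 1) / real a} Psi)"
      unfolding Phi_def using True by (simp add: sum_distrib_left)
    also have "\<dots> = c * set_lebesgue_integral lborel {0..<1} Psi"
      using sum_set_int[OF a PsiI] by simp
    also have "\<dots> = Fv a G k l"
      using fubini_psi(3)[OF G, of l k a] True unfolding Fv_def c_def Psi_def by simp
    finally show ?thesis .
  next
    case False
    then show ?thesis unfolding Phi_def Fv_def by simp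
  qed
  finally show ?thesis .
qed

lemma Fv_cont:
  fixes a :: nat and k l :: int and g :: "real \<times> real \<Rightarrow> complex" and G :: "nat \<Rightarrow> real \<times> real \<Rightarrow> complex"
  assumes g: "set_integrable lborel Omega g" and G: "\<And>n. set_integrable lborel Omega (G n)"
    and L: "(\<lambda>n. set_lebesgue_integral lborel Omega (\<lambda>p. norm (G n p - g p))) \<longlonglongrightarrow> 0"
  shows "(\<lambda>n. Fv a (G n) k l) \<longlonglongrightarrow> Fv a g k l"
proof (cases "int a dvd k")
  case False
  then show ?thesis unfolding Fv_def by simp
next
  case True
  define E where "E = (\<lambda>(\<theta>::real, \<sigma>::real). exp (- 2 * pi * \<i> * complex_of_real (of_int l * \<sigma> + of_int k * \<theta> / real a)))"
  define c where "c = exp (pi * \<i> * of_int l * of_int k / of_nat a)"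
  have nE: "norm (E x) = 1" for x
    unfolding E_def case_prod_unfold by (simp add: norm_exp_eq_Re)
  have nc: "norm c = 1" unfolding c_def by (simp add: norm_exp_eq_Re)
  have HE: "(\<lambda>(\<theta>, \<sigma>). f (\<theta>, \<sigma>) *
               exp (- 2 * pi * \<i> * complex_of_real (of_int l * \<sigma> + of_int k * \<theta> / real a))) = (\<lambda>x. f x * E x)"
    for f :: "real \<times> real \<Rightarrow> complex"
    unfolding E_def by (auto simp: case_prod_unfold)
  have FvE: "Fv a f k l = c * set_lebesgue_integral lborel Omega (\<lambda>x. f x * E x)" for f
    unfolding Fv_def c_def using True HE[of f] by simp
  have IE: "set_integrable lborel Omega (\<lambda>x. f x * E x)" if "set_integrable lborel Omega f" for f
    using fubini_psi(1)[OF that, of l k a] HE[of f] by simp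
  show ?thesis
  proof (rule LIM_zero_cancel, rule Lim_null_comparison[OF _ L], rule always_eventually, rule allI)
    fix n
    have "Fv a (G n) k l - Fv a g k l = c * set_lebesgue_integral lborel Omega (\<lambda>x. G n x * E x - g x * E x)"
      unfolding FvE using IE[OF G[of n]] IE[OF g] by (simp add: right_diff_distrib)
    then have "norm (Fv a (G n) k l - Fv a g k l) = norm (set_lebesgue_integral lborel Omega (\<lambda>x. G n x * E x - g x * E x))"
      by (simp add: norm_mult nc)
    also have "\<dots> \<le> set_lebesgue_integral lborel Omega (\<lambda>x. norm (G n x * E x - g x * E x))"
      by (rule set_integral_norm_bound) (use IE[OF G[of n]] IE[OF g] in simp)
    also have "\<dots> = set_lebesgue_integral lborel Omega (\<lambda>x. norm (G n x - g x))"
    proof -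
      have "norm (G n x * E x - g x * E x) = norm (G n x - g x)" for x
        by (simp add: left_diff_distrib[symmetric] norm_mult nE)
      then show ?thesis by simp
    qed
    finally show "norm (Fv a (G n) k l - Fv a g k l) \<le> set_lebesgue_integral lborel Omega (\<lambda>x. norm (G n x - g x))" .
  qed
qed

lemma truncation:
  fixes g :: "real \<times> real \<Rightarrow> complex"
  assumes g: "set_integrable lborel Omega g"
  shows "\<exists>G :: nat \<Rightarrow> real \<times> real \<Rightarrow> complex.
      ((\<forall>n. set_integrable lborel Omega (G n) \<and> (\<exists>B. \<forall>p\<in>Omega. norm (G n p) \<le> B)) \<and>
       (\<lambda>n. set_lebesgue_integral lborel Omega (\<lambda>p. norm (G n p - g p))) \<longlonglongrightarrow> 0)"
proof -
  define G where "G = (\<lambda>(n::nat) p. if norm (g p) \<le> real n then g p else 0)"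
  have mg: "(\<lambda>x. indicator Omega x *\<^sub>R g x) \<in> borel_measurable lborel"
    using g unfolding set_integrable_def by (rule borel_measurable_integrable)
  have GI: "set_integrable lborel Omega (G n)" for n
  proof (rule set_integrable_bound[OF g])
    have "(\<lambda>x. indicator Omega x *\<^sub>R G n x) =
        (\<lambda>x. if norm (indicator Omega x *\<^sub>R g x) \<le> real n then indicator Omega x *\<^sub>R g x else 0)"
      by (auto simp: G_def indicator_def)
    moreover have "(\<lambda>x. if norm (indicator Omega x *\<^sub>R g x) \<le> real n then indicator Omega x *\<^sub>R g x else 0)
        \<in> borel_measurable lborel"
      using mg by measurable
    ultimately show "set_borel_measurable lborel Omega (G n)"
      unfolding set_borel_measurable_def by simp
    show "AE x in lborel. x \<in> Omega \<longrightarrow> norm (G n x) \<le> norm (g x)"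
      by (simp add: G_def)
  qed
  have GB: "\<exists>B. \<forall>p\<in>Omega. norm (G n p) \<le> B" for n
    by (rule exI[of _ "real n"]) (simp add: G_def)
  have DI: "set_integrable lborel Omega (\<lambda>p. norm (G n p - g p))" for n
    by (intro set_integrable_norm set_integral_diff(1) GI g)
  have "(\<lambda>n. integral\<^sup>L lborel (\<lambda>x. indicator Omega x *\<^sub>R norm (G n x - g x))) \<longlonglongrightarrow>
        integral\<^sup>L (lborel :: (real \<times> real) measure) (\<lambda>x. 0::real)"
  proof (rule Bochner_Integration.integral_dominated_convergence[where w = "\<lambda>x. indicator Omega x *\<^sub>R norm (g x)"
     and s = "\<lambda>n x. indicator Omega x *\<^sub>R norm (G n x - g x)" and f = "\<lambda>x. 0"])
    show "(\<lambda>x. 0::real) \<in> borel_measurable lborel" by simp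
    show "(\<lambda>x. indicator Omega x *\<^sub>R norm (G n x - g x)) \<in> borel_measurable lborel" for n
      using DI[of n] unfolding set_integrable_def by (rule borel_measurable_integrable)
    show "integrable lborel (\<lambda>x. indicator Omega x *\<^sub>R norm (g x))"
      using set_integrable_norm[OF g] unfolding set_integrable_def .
    show "AE x in lborel. (\<lambda>n. indicator Omega x *\<^sub>R norm (G n x - g x)) \<longlonglongrightarrow> 0"
    proof (rule AE_I2)
      fix x
      obtain N :: nat where N: "norm (g x) \<le> real N" using real_arch_simple by blast
      have "eventually (\<lambda>n. indicator Omega x *\<^sub>R norm (G n x - g x) = 0) sequentially"
        unfolding eventually_sequentially
      proof (intro exI[of _ N] allI impI)
        fix n assume "N \<le> n"
        then have "norm (g x) \<le> real n" using N by linarith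
        then show "indicator Omega x *\<^sub>R norm (G n x - g x) = 0" by (simp add: G_def)
      qed
      then show "(\<lambda>n. indicator Omega x *\<^sub>R norm (G n x - g x)) \<longlonglongrightarrow> 0"
        by (rule tendsto_eventually)
    qed
    show "AE x in lborel. norm (indicator Omega x *\<^sub>R norm (G n x - g x)) \<le> indicator Omega x *\<^sub>R norm (g x)" for n
      by (rule AE_I2) (auto simp: G_def indicator_def)
  qed
  then have "(\<lambda>n. set_lebesgue_integral lborel Omega (\<lambda>p. norm (G n p - g p))) \<longlonglongrightarrow> 0"
    unfolding set_lebesgue_integral_def by simp
  then show ?thesis using GI GB by blast
qed

theorem lemma4p5:
  fixes a :: nat and g :: "real \<times> real \<Rightarrow> complex" and k l :: int
  assumes "a > 0"
    and "set_integrable lborel Omega g"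
  shows "alpha_M a g k l =
    (if int a dvd k
     then exp (pi * \<i> * of_int l * of_int k / of_nat a) *
          set_lebesgue_integral lborel Omega
            (\<lambda>(\<theta>, \<sigma>). g (\<theta>, \<sigma>) *
               exp (- 2 * pi * \<i> * complex_of_real (of_int l * \<sigma> + of_int k * \<theta> / real a)))
     else 0)"
proof -
  note a = assms(1) and g = assms(2)
  have "alpha_M a g k l = Fv a g k l"
    unfolding alpha_M_def
  proof (rule the_equality)
    show "\<forall>G :: nat \<Rightarrow> real \<times> real \<Rightarrow> complex.
      ((\<forall>n. set_integrable lborel Omega (G n) \<and> (\<exists>B. \<forall>p\<in>Omega. norm (G n p) \<le> B)) \<and>
       (\<lambda>n. set_lebesgue_integral lborel Omega (\<lambda>p. norm (G n p - g p))) \<longlonglongrightarrow> 0)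
      \<longrightarrow> (\<lambda>n. tau_bdd a (G n) k l) \<longlonglongrightarrow> Fv a g k l"
    proof (intro allI impI)
      fix G :: "nat \<Rightarrow> real \<times> real \<Rightarrow> complex"
      assume H: "(\<forall>n. set_integrable lborel Omega (G n) \<and> (\<exists>B. \<forall>p\<in>Omega. norm (G n p) \<le> B)) \<and>
       (\<lambda>n. set_lebesgue_integral lborel Omega (\<lambda>p. norm (G n p - g p))) \<longlonglongrightarrow> 0"
      then have "(\<lambda>n. Fv a (G n) k l) \<longlonglongrightarrow> Fv a g k l"
        by (intro Fv_cont[OF g]) auto
      moreover have "tau_bdd a (G n) k l = Fv a (G n) k l" for n
        using H tau_formula[OF a] by blast
      ultimately show "(\<lambda>n. tau_bdd a (G n) k l) \<longlonglongrightarrow> Fv a g k l" by simp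
    qed
  next
    fix c
    assume P: "\<forall>G :: nat \<Rightarrow> real \<times> real \<Rightarrow> complex.
      ((\<forall>n. set_integrable lborel Omega (G n) \<and> (\<exists>B. \<forall>p\<in>Omega. norm (G n p) \<le> B)) \<and>
       (\<lambda>n. set_lebesgue_integral lborel Omega (\<lambda>p. norm (G n p - g p))) \<longlonglongrightarrow> 0)
      \<longrightarrow> (\<lambda>n. tau_bdd a (G n) k l) \<longlonglongrightarrow> c"
    obtain G :: "nat \<Rightarrow> real \<times> real \<Rightarrow> complex" where H:
      "(\<forall>n. set_integrable lborel Omega (G n) \<and> (\<exists>B. \<forall>p\<in>Omega. norm (G n p) \<le> B)) \<and>
       (\<lambda>n. set_lebesgue_integral lborel Omega (\<lambda>p. norm (G n p - g p))) \<longlonglongrightarrow> 0"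
      using truncation[OF g] by blast
    have 1: "(\<lambda>n. tau_bdd a (G n) k l) \<longlonglongrightarrow> c" using P H by blast
    have "(\<lambda>n. Fv a (G n) k l) \<longlonglongrightarrow> Fv a g k l"
      using H by (intro Fv_cont[OF g]) auto
    moreover have "tau_bdd a (G n) k l = Fv a (G n) k l" for n
      using H tau_formula[OF a] by blast
    ultimately have 2: "(\<lambda>n. tau_bdd a (G n) k l) \<longlonglongrightarrow> Fv a g k l" by simp
    show "c = Fv a g k l" using LIMSEQ_unique[OF 1 2] .
  qed
  then show ?thesis unfolding Fv_def .
qed

end
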